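(* Let $G$ be a group generated by a finite set $S$, acting by isometries on a geodesic $\delta$-hyperbolic $\mathbb{R}$-metric space $(X,d)$ ($\delta\geqslant0$), and let $x\in X$ with stabilizer $G_x$. Suppose the action is proper relative to $x$ and satisfies $(R2,k)$ for some $k\in\mathbb{N}$. Then $G$ is weakly hyperbolic relative to $G_x$.
   Context: An $\mathbb{R}$-metric space is an ordinary metric space; it is geodesic if any two points are joined by an isometrically embedded real interval; with Gromov product $(y\cdot z)_w=\tfrac12(d(y,w)+d(z,w)-d(y,z))$ it is $\delta$-hyperbolic if $(y\cdot z)_w\geqslant\min\{(y\cdot u)_w,(u\cdot z)_w\}-\delta$ for all $w,y,z,u$. The action satisfies $(R2,k)$ (with respect to $x$) if for all $g,h\in G$ there is $u\in G$ with $d(x,ux)\leqslant(gx\cdot hx)_x+k\delta$, $d(x,u^{-1}gx)\leqslant(g^{-1}x\cdot g^{-1}hx)_x+k\delta$ and $d(x,u^{-1}hx)\leqslant(h^{-1}x\cdot h^{-1}gx)_x+k\delta$. Let $\Gamma(G,S\cup G_x)$ be the Cayley graph of $G$ with respect to the (possibly infinite) generating set $S\cup G_x$, with its path metric. The action is proper relative to $x$ if there is $\alpha>0$ with $d(x,gx)>\alpha$ for every $g\in G\smallsetminus G_x$, and for every $N\in\mathbb{N}$ the set $B_N=\{g\in G: d(x,gx)\leqslant N\}$ is bounded in $\Gamma(G,S\cup G_x)$. $G$ is weakly hyperbolic relative to a subgroup $H$ (in the sense of Farb and Osin) if the Cayley graph $\Gamma(G,S\cup H)$ is a Gromov-hyperbolic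 metric space. *)

theory Defs
  imports "HOL-Analysis.Analysis" "HOL-Algebra.Group_Action" "HOL-Algebra.Generated_Groups"
begin

definition gromov_prod :: "('a \<Rightarrow> 'a \<Rightarrow> real) \<Rightarrow> 'a \<Rightarrow> 'a \<Rightarrow> 'a \<Rightarrow> real" where
  "gromov_prod d w y z = (d y w + d z w - d y z) / 2"

definition gromov_hyperbolic_on :: "'a set \<Rightarrow> ('a \<Rightarrow> 'a \<Rightarrow> real) \<Rightarrow> real \<Rightarrow> bool" where
  "gromov_hyperbolic_on A d \<delta> \<longleftrightarrow>
     (\<forall>w\<in>A. \<forall>y\<in>A. \<forall>z\<in>A. \<forall>u\<in>A.
        gromov_prod d w y z \<ge> min (gromov_prod d w y u) (gromov_prod d w u z) - \<delta>)"

definition geodesic_space :: "'x::metric_space itself \<Rightarrow> bool" where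
  "geodesic_space _ \<longleftrightarrow> (\<forall>y z::'x. \<exists>\<gamma>::real \<Rightarrow> 'x. \<gamma> 0 = y \<and> \<gamma> (dist y z) = z \<and>
      (\<forall>s\<in>{0..dist y z}. \<forall>t\<in>{0..dist y z}. dist (\<gamma> s) (\<gamma> t) = \<bar>s - t\<bar>))"

definition word_length :: "('g, 'b) monoid_scheme \<Rightarrow> 'g set \<Rightarrow> 'g \<Rightarrow> nat" where
  "word_length G T g = (LEAST n. \<exists>ws. length ws = n \<and> set ws \<subseteq> T \<union> ((\<lambda>s. inv\<^bsub>G\<^esub> s) ` T) \<and>
                                   foldr (\<lambda>a b. a \<otimes>\<^bsub>G\<^esub> b) ws \<one>\<^bsub>G\<^esub> = g)"

text \<open>Path metric of the Cayley graph Gamma(G,T), restricted to its vertex set G.\<close>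
definition cayley_dist :: "('g, 'b) monoid_scheme \<Rightarrow> 'g set \<Rightarrow> 'g \<Rightarrow> 'g \<Rightarrow> real" where
  "cayley_dist G T g h = real (word_length G T (inv\<^bsub>G\<^esub> g \<otimes>\<^bsub>G\<^esub> h))"

definition stabilizer_pt :: "('g, 'b) monoid_scheme \<Rightarrow> ('g \<Rightarrow> 'x \<Rightarrow> 'x) \<Rightarrow> 'x \<Rightarrow> 'g set" where
  "stabilizer_pt G \<phi> x = {g \<in> carrier G. \<phi> g x = x}"

definition isometric_action :: "('g, 'b) monoid_scheme \<Rightarrow> ('g \<Rightarrow> 'x::metric_space \<Rightarrow> 'x) \<Rightarrow> bool" where
  "isometric_action G \<phi> \<longleftrightarrow> group_action G UNIV \<phi> \<and>
     (\<forall>g\<in>carrier G. \<forall>y z. dist (\<phi> g y) (\<phi> g z) = dist y z)"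

definition proper_rel :: "('g, 'b) monoid_scheme \<Rightarrow> 'g set \<Rightarrow> ('g \<Rightarrow> 'x::metric_space \<Rightarrow> 'x) \<Rightarrow> 'x \<Rightarrow> bool" where
  "proper_rel G S \<phi> x \<longleftrightarrow>
     (\<exists>\<alpha>>0. \<forall>g\<in>carrier G - stabilizer_pt G \<phi> x. dist x (\<phi> g x) > \<alpha>) \<and>
     (\<forall>N::nat. \<exists>R. \<forall>g\<in>{g\<in>carrier G. dist x (\<phi> g x) \<le> real N}.
         cayley_dist G (S \<union> stabilizer_pt G \<phi> x) \<one>\<^bsub>G\<^esub> g \<le> R)"

definition R2_cond :: "('g, 'b) monoid_scheme \<Rightarrow> ('g \<Rightarrow> 'x::metric_space \<Rightarrow> 'x) \<Rightarrow> 'x \<Rightarrow> real \<Rightarrow> nat \<Rightarrow> bool" where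
  "R2_cond G \<phi> x \<delta> k \<longleftrightarrow>
     (\<forall>g\<in>carrier G. \<forall>h\<in>carrier G. \<exists>u\<in>carrier G.
        dist x (\<phi> u x) \<le> gromov_prod dist x (\<phi> g x) (\<phi> h x) + real k * \<delta> \<and>
        dist x (\<phi> (inv\<^bsub>G\<^esub> u \<otimes>\<^bsub>G\<^esub> g) x) \<le>
          gromov_prod dist x (\<phi> (inv\<^bsub>G\<^esub> g) x) (\<phi> (inv\<^bsub>G\<^esub> g \<otimes>\<^bsub>G\<^esub> h) x) + real k * \<delta> \<and>
        dist x (\<phi> (inv\<^bsub>G\<^esub> u \<otimes>\<^bsub>G\<^esub> h) x) \<le>
          gromov_prod dist x (\<phi> (inv\<^bsub>G\<^esub> h) x) (\<phi> (inv\<^bsub>G\<^esub> h \<otimes>\<^bsub>G\<^esub> g) x) + real k * \<delta>)"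

end

theory Submission
  imports Defs
begin

abbreviation gp :: "'x::metric_space \<Rightarrow> 'x \<Rightarrow> 'x \<Rightarrow> real" where
  "gp w y z \<equiv> gromov_prod dist w y z"

lemma gp_sym: "gp w y z = gp w z y"
  unfolding gromov_prod_def by (simp add: dist_commute)

lemma gp_nonneg: "0 \<le> gp w y z"
  unfolding gromov_prod_def by metric

lemma gp_le1: "gp w y z \<le> dist w y"
  unfolding gromov_prod_def by metric

lemma gp_ge1: "dist w y - dist y z \<le> gp w y z"
  unfolding gromov_prod_def by metric

lemma gp_ge2: "dist w z - dist y z \<le> gp w y z"
  unfolding gromov_prod_def by metric

lemma gp_base: "gp w y z \<le> gp v y z + dist w v"
  unfolding gromov_prod_def by metric

lemma gp_lip3: "gp w y z \<le> gp w y z' + dist z z'"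
  unfolding gromov_prod_def by metric

lemma gp_geo_zero: "dist y w + dist w z = dist y z \<Longrightarrow> gp w y z = 0"
  unfolding gromov_prod_def by (simp add: dist_commute)

lemma four_point:
  assumes "gromov_hyperbolic_on (UNIV::'x::metric_space set) dist \<delta>"
  shows "min (gp w y u) (gp w u z) - \<delta> \<le> gp w y (z::'x)"
  using assms unfolding gromov_hyperbolic_on_def by blast

lemma geo_point:
  assumes "geodesic_space TYPE('x::metric_space)" "0 \<le> t" "t \<le> dist y z"
  shows "\<exists>p::'x. dist y p = t \<and> dist p z = dist y z - t"
proof -
  obtain \<gamma> :: "real \<Rightarrow> 'x" where g: "\<gamma> 0 = y" "\<gamma> (dist y z) = z"
    "\<forall>s\<in>{0..dist y z}. \<forall>u\<in>{0..dist y z}. dist (\<gamma> s) (\<gamma> u) = \<bar>s - u\<bar>"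
    using assms(1) unfolding geodesic_space_def by blast
  have "dist y (\<gamma> t) = t" using g(3)[rule_format, of 0 t] assms g(1) by auto
  moreover have "dist (\<gamma> t) z = dist y z - t" using g(3)[rule_format, of t "dist y z"] assms g(2) by auto
  ultimately show ?thesis by blast
qed

lemma log_lemma:
  assumes hyp: "gromov_hyperbolic_on (UNIV::'x::metric_space set) dist \<delta>" and d0: "0 \<le> \<delta>"
  shows "0 < m \<Longrightarrow> m \<le> 2^N \<Longrightarrow> (\<forall>i<m. M \<le> gp w (p i) (p (Suc i))) \<Longrightarrow>
     M - real N * \<delta> \<le> gp w (p 0) (p m :: 'x)"
proof (induction N arbitrary: p m)
  case 0
  then have "m = 1" by auto
  then show ?case using 0 by auto
next
  case (Suc N)
  show ?case
  proof (cases "m \<le> 2^N")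
    case True
    then have "M - real N * \<delta> \<le> gp w (p 0) (p m)" using Suc by blast
    moreover have "real N * \<delta> \<le> real (Suc N) * \<delta>" using d0 by (simp add: mult_right_mono)
    ultimately show ?thesis by linarith
  next
    case False
    define k :: nat where "k = 2^N"
    have k: "0 < k" "k < m" "m - k \<le> 2^N" using False Suc.prems(2) by (auto simp: k_def)
    have h1: "M - real N * \<delta> \<le> gp w (p 0) (p k)"
      using Suc.IH[of k p] k Suc.prems(3) by (simp add: k_def)
    have h2: "M - real N * \<delta> \<le> gp w (p (k + 0)) (p (k + (m - k)))"
      using Suc.IH[of "m - k" "\<lambda>i. p (k + i)"] k Suc.prems(3) by auto
    have "min (gp w (p 0) (p k)) (gp w (p k) (p m)) - \<delta> \<le> gp w (p 0) (p m)"
      by (rule four_point[OF hyp])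
    moreover have "M - real N * \<delta> \<le> min (gp w (p 0) (p k)) (gp w (p k) (p m))"
      using h1 h2 k by simp
    ultimately have "M - real N * \<delta> - \<delta> \<le> gp w (p 0) (p m)" by linarith
    then show ?thesis by (simp add: algebra_simps)
  qed
qed

lemma exists_pow2:
  assumes "0 < (m::nat)" shows "\<exists>N. m \<le> 2^N \<and> 2^N \<le> 2*m"
proof -
  define N where "N = (LEAST N. m \<le> 2^N)"
  have ex: "m \<le> 2^m" using less_exp[of m] by simp
  have a: "m \<le> 2^N" unfolding N_def by (rule LeastI[of _ m]) (rule ex)
  have "2^N \<le> 2*m"
  proof (cases N)
    case 0 then show ?thesis using assms by simp
  next
    case (Suc N')
    then have "\<not> m \<le> 2^N'" unfolding N_def using not_less_Least[of N' "\<lambda>N. m \<le> 2^N"] Suc N_def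
      by (metis lessI)
    then show ?thesis using Suc by simp
  qed
  then show ?thesis using a by blast
qed

lemma sq_le_pow2: "(N::nat) * N \<le> 2^N + 4"
proof (induction N rule: nat_less_induct)
  case (1 n)
  show ?case
  proof (cases "n \<le> 4")
    case True
    then have "n = 0 \<or> n = 1 \<or> n = 2 \<or> n = 3 \<or> n = 4" by auto
    then show ?thesis by auto
  next
    case False
    then obtain m where m: "n = Suc m" "m \<ge> 4" by (cases n) auto
    have ih: "m * m \<le> 2^m + 4" using 1 m by auto
    have "2 * m + 1 \<le> 2^m"
    proof -
      have "\<forall>j\<ge>4. 2*j+1 \<le> (2::nat)^j"
      proof (intro allI impI)
        fix j :: nat assume "4 \<le> j"
        then show "2*j+1 \<le> (2::nat)^j"
        proof (induction j rule: dec_induct)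
          case base then show ?case by simp
        next
          case (step j) then show ?case by simp
        qed
      qed
      then show ?thesis using m by blast
    qed
    then show ?thesis using ih m by (simp add: algebra_simps)
  qed
qed

lemma pow_bound:
  assumes "0 \<le> P" "0 \<le> Q"
  shows "\<exists>N0::nat. \<forall>N::nat. 2^N \<le> P * real N + Q \<longrightarrow> N \<le> N0"
proof -
  obtain N0 :: nat where N0: "P + Q + 4 \<le> real N0" using real_arch_simple by blast
  have "N \<le> N0" if h: "2^N \<le> P * real N + Q" for N
  proof (cases "N = 0")
    case True then show ?thesis by simp
  next
    case False
    have "real (N * N) \<le> 2^N + 4" using sq_le_pow2[of N] by (metis of_nat_le_iff of_nat_add of_nat_numeral of_nat_power)
    then have "real N * real N \<le> P * real N + Q + 4" using h by simp
    also have "\<dots> \<le> (P + Q + 4) * real N" proof -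
      have "1 \<le> real N" using False by simp
      then have "Q + 4 \<le> (Q + 4) * real N" using assms by (simp add: mult_le_cancel_left1)
      then show ?thesis by (simp add: algebra_simps)
    qed
    finally have "real N \<le> P + Q + 4" using False by (simp add: mult_le_cancel_right)
    then show ?thesis using N0 by linarith
  qed
  then show ?thesis by blast
qed

lemma proj_lemma:
  assumes hyp: "gromov_hyperbolic_on (UNIV::'x::metric_space set) dist \<delta>"
    and geo: "geodesic_space TYPE('x)"
  shows "\<exists>p'. dist (a::'x) p' + dist p' z = dist a z \<and> dist p p' \<le> gp p a z + 2*\<delta>"
proof -
  define t where "t = gp a p (z::'x)"
  have t0: "0 \<le> t" unfolding t_def by (rule gp_nonneg)
  have t1: "t \<le> dist a z" unfolding t_def using gp_le1[of a z p] gp_sym[of a p z] by simp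
  obtain p' where p': "dist a p' = t" "dist p' z = dist a z - t" using geo_point[OF geo t0 t1] by blast
  have "min (gp a p z) (gp a z p') - \<delta> \<le> gp a p p'" by (rule four_point[OF hyp])
  moreover have "gp a z p' = t" unfolding gromov_prod_def using p' by (simp add: dist_commute)
  ultimately have "t - \<delta> \<le> gp a p p'" unfolding t_def by simp
  then have h: "dist p p' \<le> dist p a + dist p' a - 2*(t - \<delta>)" unfolding gromov_prod_def by simp
  have "gp p a z = dist p a - t" unfolding t_def gromov_prod_def
    using dist_commute[of p a] dist_commute[of z a] dist_commute[of z p] by (simp add: field_simps)
  then have "dist p p' \<le> gp p a z + 2*\<delta>" using h p'(1) dist_commute[of p' a] by simp
  then show ?thesis using p' by (intro exI[of _ p']) simp
qed

definition qgeo :: "(nat \<Rightarrow> 'x::metric_space) \<Rightarrow> nat \<Rightarrow> real \<Rightarrow> real \<Rightarrow> real \<Rightarrow> bool" where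
  "qgeo q n L A B \<longleftrightarrow> (\<forall>i\<le>n. \<forall>j\<le>n. dist (q i) (q j) \<le> L * \<bar>real i - real j\<bar> \<and>
      \<bar>real i - real j\<bar> \<le> A * dist (q i) (q j) + B)"

lemma qgeo_D1: "qgeo q n L A B \<Longrightarrow> i \<le> n \<Longrightarrow> j \<le> n \<Longrightarrow> dist (q i) (q j) \<le> L * \<bar>real i - real j\<bar>"
  unfolding qgeo_def by blast

lemma qgeo_D2: "qgeo q n L A B \<Longrightarrow> i \<le> n \<Longrightarrow> j \<le> n \<Longrightarrow> \<bar>real i - real j\<bar> \<le> A * dist (q i) (q j) + B"
  unfolding qgeo_def by blast

lemma path_bound:
  assumes hyp: "gromov_hyperbolic_on (UNIV::'x::metric_space set) dist \<delta>" and d0: "0 \<le> \<delta>"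
    and qg: "qgeo q n L A B" and L0: "0 \<le> L"
    and s: "s1 \<le> s2" "s2 \<le> n"
    and y: "D - 1 \<le> dist w y' - dist y' (q s1)"
    and z: "D - 1 \<le> dist w z' - dist z' (q s2)"
    and far: "\<forall>i\<le>n. D \<le> dist w (q i)"
  shows "\<exists>N. real (2^N) \<le> 2*(real (s2 - s1) + 2) \<and> D - 1 - L - real N * \<delta> \<le> gp w y' (z'::'x)"
proof -
  define m where "m = s2 - s1 + 2"
  define p where "p j = (if j = 0 then y' else if j \<le> s2 - s1 + 1 then q (s1 + j - 1) else z')" for j
  have p0: "p 0 = y'" and pm: "p m = z'" unfolding p_def m_def by auto
  have steps: "\<forall>i<m. D - 1 - L \<le> gp w (p i) (p (Suc i))"
  proof (intro allI impI)
    fix i assume i: "i < m"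
    show "D - 1 - L \<le> gp w (p i) (p (Suc i))"
    proof (cases "i = 0")
      case True
      then have "p i = y'" "p (Suc i) = q s1" unfolding p_def by auto
      then show ?thesis using gp_ge1[of w y' "q s1"] y L0 by simp
    next
      case False
      show ?thesis
      proof (cases "i \<le> s2 - s1")
        case True
        then have e: "p i = q (s1 + i - 1)" "p (Suc i) = q (s1 + i)" unfolding p_def using False by auto
        have "dist (q (s1 + i - 1)) (q (s1 + i)) \<le> L * \<bar>real (s1 + i - 1) - real (s1 + i)\<bar>"
          using qgeo_D1[OF qg, of "s1 + i - 1" "s1 + i"] True s False by auto
        also have "\<dots> = L" using False by simp
        finally have "dist (q (s1 + i - 1)) (q (s1 + i)) \<le> L" .
        moreover have "D \<le> dist w (q (s1 + i - 1))" using far True s by auto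
        ultimately show ?thesis using e gp_ge1[of w "q (s1 + i - 1)" "q (s1 + i)"] by simp
      next
        case False2: False
        then have "i = s2 - s1 + 1" using i unfolding m_def by auto
        then have e: "p i = q s2" "p (Suc i) = z'" unfolding p_def using s by auto
        moreover have "dist z' (q s2) = dist (q s2) z'" by (rule dist_commute)
        ultimately show ?thesis unfolding e using gp_ge2[of w z' "q s2"] z L0 by linarith
      qed
    qed
  qed
  obtain N where N: "m \<le> 2^N" "2^N \<le> 2*m" using exists_pow2[of m] unfolding m_def by auto
  have "D - 1 - L - real N * \<delta> \<le> gp w (p 0) (p m)"
    by (rule log_lemma[OF hyp d0 _ N(1) steps]) (simp add: m_def)
  moreover have "real (2^N) \<le> 2*(real (s2 - s1) + 2)"
  proof -
    have "real (2^N) \<le> real (2*m)" using N(2) by (simp only: of_nat_le_iff)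
    then show ?thesis unfolding m_def using s by simp
  qed
  ultimately show ?thesis using p0 pm by auto
qed

lemma morse1_geo:
  assumes hyp: "gromov_hyperbolic_on (UNIV::'x::metric_space set) dist \<delta>" and d0: "0 \<le> \<delta>"
    and geo: "geodesic_space TYPE('x)"
    and L0: "0 \<le> L" and A0: "0 \<le> A" and B0: "0 \<le> B"
  shows "\<exists>M. \<forall>n (q::nat \<Rightarrow> 'x). qgeo q n L A B \<longrightarrow>
    (\<forall>w. dist (q 0) w + dist w (q n) = dist (q 0) (q n) \<longrightarrow> (\<exists>i\<le>n. dist w (q i) \<le> M))"
proof -
  obtain N0 where N0: "\<forall>N::nat. 2^N \<le> (12*A*\<delta>) * real N + (2*A*(8+6*L)+2*B+4) \<longrightarrow> N \<le> N0"
    using pow_bound[of "12*A*\<delta>" "2*A*(8+6*L)+2*B+4"] A0 d0 L0 B0 by auto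
  define M0 where "M0 = 1 + L + real N0 * \<delta>"
  have key: "D \<le> M0" if qg: "qgeo q n L A B"
      and wW: "dist (q 0) w + dist w (q n) = dist (q 0) (q n)"
      and D: "D = Min ((\<lambda>i. dist w (q i)) ` {..n})"
      and near: "\<forall>v. dist (q 0) v + dist v (q n) = dist (q 0) (q n) \<longrightarrow> (\<exists>i\<le>n. dist v (q i) < D + 1)"
      for q :: "nat \<Rightarrow> 'x" and n w D
  proof -
    have Dle: "\<forall>i\<le>n. D \<le> dist w (q i)" using D by auto
    have "D \<in> (\<lambda>i. dist w (q i)) ` {..n}" unfolding D by (rule Min_in) auto
    then have D0: "0 \<le> D" by auto
    obtain y' s1 where y': "s1 \<le> n" "dist (q 0) y' + dist y' w = dist (q 0) w"
      "D - 1 \<le> dist w y' - dist y' (q s1)" "dist y' (q s1) \<le> D + 1" "dist y' w \<le> 2*D"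
    proof (cases "dist (q 0) w \<le> 2*D")
      case True
      then show ?thesis using that[of 0 "q 0"] Dle D0 by (auto simp: dist_commute)
    next
      case False
      obtain p where p: "dist (q 0) p = dist (q 0) w - 2*D" "dist p w = dist (q 0) w - (dist (q 0) w - 2*D)"
        using geo_point[OF geo, of "dist (q 0) w - 2*D" "q 0" w] False D0 by auto
      have pW: "dist (q 0) p + dist p (q n) = dist (q 0) (q n)"
        using p wW dist_triangle[of p "q n" w] dist_triangle[of "q 0" "q n" p] by (smt (verit))
      obtain s1 where s1: "s1 \<le> n" "dist p (q s1) < D + 1" using near pW by blast
      show ?thesis using that[of s1 p] p s1 by (auto simp: dist_commute)
    qed
    obtain z' s2 where z': "s2 \<le> n" "dist w z' + dist z' (q n) = dist w (q n)"
      "D - 1 \<le> dist w z' - dist z' (q s2)" "dist z' (q s2) \<le> D + 1" "dist w z' \<le> 2*D"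
    proof (cases "dist w (q n) \<le> 2*D")
      case True
      then show ?thesis using that[of n "q n"] Dle D0 by (auto simp: dist_commute)
    next
      case False
      obtain p where p: "dist w p = 2*D" "dist p (q n) = dist w (q n) - 2*D"
        using geo_point[OF geo, of "2*D" w "q n"] False D0 by auto
      have pW: "dist (q 0) p + dist p (q n) = dist (q 0) (q n)"
        using p wW dist_triangle[of "q 0" p w] dist_triangle[of "q 0" "q n" p] by (smt (verit))
      obtain s2 where s2: "s2 \<le> n" "dist p (q s2) < D + 1" using near pW by blast
      show ?thesis using that[of s2 p] p s2 by (auto simp: dist_commute)
    qed
    have "dist y' w + dist w z' = dist y' z'"
      using y'(2) z'(2) wW dist_triangle[of y' z' w] dist_triangle[of "q 0" "q n" y']
        dist_triangle[of y' "q n" z'] by (smt (verit))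
    then have gp0: "gp w y' z' = 0" by (rule gp_geo_zero)
    obtain N where N: "real (2^N) \<le> 2*(\<bar>real s1 - real s2\<bar> + 2)" "D - 1 - L - real N * \<delta> \<le> 0"
    proof (cases "s1 \<le> s2")
      case True
      obtain N where "real (2^N) \<le> 2*(real (s2 - s1) + 2)" "D - 1 - L - real N * \<delta> \<le> gp w y' z'"
        using path_bound[OF hyp d0 qg L0 True z'(1) y'(3) z'(3) Dle] by blast
      then show ?thesis using that[of N] gp0 True by (simp add: of_nat_diff)
    next
      case False
      obtain N where "real (2^N) \<le> 2*(real (s1 - s2) + 2)" "D - 1 - L - real N * \<delta> \<le> gp w z' y'"
        using path_bound[OF hyp d0 qg L0 _ y'(1) z'(3) y'(3) Dle] False by fastforce
      then show ?thesis using that[of N] gp0 gp_sym[of w y' z'] False by (simp add: of_nat_diff)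
    qed
    have "dist (q s1) (q s2) \<le> 6*D + 2"
      using y'(4,5) z'(4,5) dist_triangle[of "q s1" "q s2" y'] dist_triangle[of y' "q s2" w]
        dist_triangle[of w "q s2" z'] dist_commute[of y' "q s1"] dist_commute[of y' w] by linarith
    then have "A * dist (q s1) (q s2) \<le> A * (6*D + 2)" using A0 by (rule mult_left_mono)
    then have sd: "\<bar>real s1 - real s2\<bar> \<le> A*(6*D+2) + B"
      using qgeo_D2[OF qg y'(1) z'(1)] by linarith
    have DN: "D \<le> 1 + L + real N * \<delta>" using N(2) by linarith
    have "A * D \<le> A * (1 + L + real N * \<delta>)" using DN A0 by (rule mult_left_mono)
    then have "real (2^N) \<le> (12*A*\<delta>) * real N + (2*A*(8+6*L)+2*B+4)"
      using N(1) sd by (simp add: algebra_simps)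
    then have "N \<le> N0" using N0 by simp
    then have "real N * \<delta> \<le> real N0 * \<delta>" using d0 by (simp add: mult_right_mono)
    then show ?thesis using DN unfolding M0_def by linarith
  qed
  show ?thesis
  proof (intro exI[of _ "M0 + 1"] allI impI)
    fix n and q :: "nat \<Rightarrow> 'x" and w
    assume qg: "qgeo q n L A B" and wW: "dist (q 0) w + dist w (q n) = dist (q 0) (q n)"
    define \<rho> where "\<rho> v = Min ((\<lambda>i. dist v (q i)) ` {..n})" for v
    define W where "W = {v. dist (q 0) v + dist v (q n) = dist (q 0) (q n)}"
    have \<rho>_att: "\<exists>i\<le>n. dist v (q i) = \<rho> v" for v
    proof -
      have "\<rho> v \<in> (\<lambda>i. dist v (q i)) ` {..n}" unfolding \<rho>_def by (rule Min_in) auto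
      then show ?thesis by auto
    qed
    have \<rho>_le: "\<rho> v \<le> dist v (q i)" if "i \<le> n" for v i
      unfolding \<rho>_def using that by auto
    have bdd: "bdd_above (\<rho> ` W)"
    proof (rule bdd_aboveI2)
      fix v assume "v \<in> W"
      then have "dist (q 0) v + dist v (q n) = dist (q 0) (q n)" unfolding W_def by simp
      then have "dist (q 0) v \<le> dist (q 0) (q n)" using zero_le_dist[of v "q n"] by linarith
      then have "dist v (q 0) \<le> dist (q 0) (q n)" by (simp add: dist_commute)
      then show "\<rho> v \<le> dist (q 0) (q n)" using \<rho>_le[of 0 v] by linarith
    qed
    have "q 0 \<in> W" unfolding W_def by simp
    then have ne: "\<rho> ` W \<noteq> {}" by blast
    have upper: "\<rho> v \<le> Sup (\<rho> ` W)" if "v \<in> W" for v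
      using bdd that by (simp add: cSup_upper)
    have "Sup (\<rho> ` W) - 1 < Sup (\<rho> ` W)" by simp
    then obtain w0 where w0: "w0 \<in> W" "Sup (\<rho> ` W) - 1 < \<rho> w0"
      using less_cSup_iff[OF ne bdd] by auto
    have "\<rho> w0 \<le> M0"
    proof (rule key[OF qg _ _ ])
      show "dist (q 0) w0 + dist w0 (q n) = dist (q 0) (q n)" using w0 unfolding W_def by simp
      show "\<rho> w0 = Min ((\<lambda>i. dist w0 (q i)) ` {..n})" unfolding \<rho>_def ..
      show "\<forall>v. dist (q 0) v + dist v (q n) = dist (q 0) (q n) \<longrightarrow> (\<exists>i\<le>n. dist v (q i) < \<rho> w0 + 1)"
      proof (intro allI impI)
        fix v assume "dist (q 0) v + dist v (q n) = dist (q 0) (q n)"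
        then have "v \<in> W" unfolding W_def by simp
        then have "\<rho> v < \<rho> w0 + 1" using upper w0 by fastforce
        then show "\<exists>i\<le>n. dist v (q i) < \<rho> w0 + 1" using \<rho>_att[of v] by auto
      qed
    qed
    moreover have "w \<in> W" using wW unfolding W_def by simp
    ultimately have "\<rho> w \<le> M0 + 1" using upper w0 by fastforce
    then show "\<exists>i\<le>n. dist w (q i) \<le> M0 + 1" using \<rho>_att[of w] by auto
  qed
qed

lemma morse1_gen:
  assumes hyp: "gromov_hyperbolic_on (UNIV::'x::metric_space set) dist \<delta>" and d0: "0 \<le> \<delta>"
    and geo: "geodesic_space TYPE('x)"
    and L0: "0 \<le> L" and A0: "0 \<le> A" and B0: "0 \<le> B"
  shows "\<exists>M. \<forall>n (q::nat \<Rightarrow> 'x). qgeo q n L A B \<longrightarrow>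
    (\<forall>w. gp w (q 0) (q n) \<le> c \<longrightarrow> (\<exists>i\<le>n. dist w (q i) \<le> M))"
proof -
  obtain M1 where M1: "\<forall>n (q::nat \<Rightarrow> 'x). qgeo q n L A B \<longrightarrow>
    (\<forall>w. dist (q 0) w + dist w (q n) = dist (q 0) (q n) \<longrightarrow> (\<exists>i\<le>n. dist w (q i) \<le> M1))"
    using morse1_geo[OF hyp d0 geo L0 A0 B0] by blast
  show ?thesis
  proof (intro exI[of _ "M1 + c + 2*\<delta>"] allI impI)
    fix n and q :: "nat \<Rightarrow> 'x" and w
    assume qg: "qgeo q n L A B" and c: "gp w (q 0) (q n) \<le> c"
    obtain p' where p': "dist (q 0) p' + dist p' (q n) = dist (q 0) (q n)" "dist w p' \<le> gp w (q 0) (q n) + 2*\<delta>"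
      using proj_lemma[OF hyp geo, of "q 0" "q n" w] by blast
    obtain i where i: "i \<le> n" "dist p' (q i) \<le> M1" using M1 qg p'(1) by blast
    have "dist w (q i) \<le> dist w p' + dist p' (q i)" by (rule dist_triangle)
    then show "\<exists>i\<le>n. dist w (q i) \<le> M1 + c + 2*\<delta>" using i p'(2) c by (intro exI[of _ i]) auto
  qed
qed

lemma morse2:
  assumes hyp: "gromov_hyperbolic_on (UNIV::'x::metric_space set) dist \<delta>" and d0: "0 \<le> \<delta>"
    and geo: "geodesic_space TYPE('x)"
    and L0: "0 \<le> L" and A0: "0 \<le> A" and B0: "0 \<le> B"
  shows "\<exists>H. \<forall>n (q::nat \<Rightarrow> 'x). qgeo q n L A B \<longrightarrow> (\<forall>i\<le>n. gp (q i) (q 0) (q n) \<le> H)"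
proof -
  obtain M1' where M1': "\<forall>n (q::nat \<Rightarrow> 'x). qgeo q n L A B \<longrightarrow>
    (\<forall>w. dist (q 0) w + dist w (q n) = dist (q 0) (q n) \<longrightarrow> (\<exists>i\<le>n. dist w (q i) \<le> M1'))"
    using morse1_geo[OF hyp d0 geo L0 A0 B0] by blast
  define M1 where "M1 = max M1' 0"
  have M1: "\<forall>n (q::nat \<Rightarrow> 'x). qgeo q n L A B \<longrightarrow>
    (\<forall>w. dist (q 0) w + dist w (q n) = dist (q 0) (q n) \<longrightarrow> (\<exists>i\<le>n. dist w (q i) \<le> M1))"
    using M1' unfolding M1_def by (meson max.coboundedI1)
  have M10: "0 \<le> M1" unfolding M1_def by simp
  define H where "H = M1 + L * (A * (2*M1+1) + B)"
  show ?thesis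
  proof (intro exI[of _ H] allI impI)
    fix n and q :: "nat \<Rightarrow> 'x" and i
    assume qg: "qgeo q n L A B" and i: "i \<le> n"
    define ell where "ell = dist (q 0) (q n)"
    obtain \<gamma> :: "real \<Rightarrow> 'x" where g: "\<gamma> 0 = q 0" "\<gamma> ell = q n"
      "\<forall>s\<in>{0..ell}. \<forall>u\<in>{0..ell}. dist (\<gamma> s) (\<gamma> u) = \<bar>s - u\<bar>"
      using geo unfolding geodesic_space_def ell_def by blast
    define K :: nat where "K = nat \<lceil>ell\<rceil> + 1"
    have K0: "0 < K" unfolding K_def by simp
    have Kl: "ell \<le> real K" unfolding K_def by linarith
    have l0: "0 \<le> ell" unfolding ell_def by simp
    define w where "w k = \<gamma> (real k * ell / real K)" for k
    have tin: "real k * ell / real K \<in> {0..ell}" if "k \<le> K" for k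
    proof -
      have "real k * ell \<le> real K * ell" using that l0 by (simp add: mult_right_mono)
      then show ?thesis using K0 l0 by (simp add: divide_le_eq mult.commute)
    qed
    have wW: "dist (q 0) (w k) + dist (w k) (q n) = dist (q 0) (q n)" if "k \<le> K" for k
    proof -
      have "dist (\<gamma> 0) (w k) = real k * ell / real K" unfolding w_def
        using g(3)[rule_format, of 0 "real k * ell / real K"] tin[OF that] l0 by simp
      moreover have "dist (w k) (\<gamma> ell) = ell - real k * ell / real K" unfolding w_def
        using g(3)[rule_format, of "real k * ell / real K" ell] tin[OF that] l0 by simp
      ultimately show ?thesis using g unfolding ell_def by simp
    qed
    have wstep: "dist (w k) (w (Suc k)) \<le> 1" if "Suc k \<le> K" for k
    proof -
      have "dist (w k) (w (Suc k)) = \<bar>real k * ell / real K - real (Suc k) * ell / real K\<bar>"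
        unfolding w_def using g(3) tin[of k] tin[of "Suc k"] that by simp
      also have "\<dots> = ell / real K" using l0 K0 by (simp add: field_simps)
      also have "\<dots> \<le> 1" using Kl K0 by (simp add: divide_le_eq)
      finally show ?thesis .
    qed
    have wK: "w K = q n" unfolding w_def using K0 g(2) by simp
    have w0: "w 0 = q 0" unfolding w_def using g(1) by simp
    define P where "P k \<longleftrightarrow> (\<exists>j. i \<le> j \<and> j \<le> n \<and> dist (w k) (q j) \<le> M1)" for k
    have PK: "P K" unfolding P_def using wK i M10 by (intro exI[of _ n]) auto
    define k0 where "k0 = (LEAST k. P k)"
    have Pk0: "P k0" unfolding k0_def using PK by (rule LeastI)
    have k0K: "k0 \<le> K" unfolding k0_def using PK by (rule Least_le)
    have gpH: "gp (q i) (q 0) (q n) \<le> M1 + L * (A * (2*M1+1) + B)"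
    proof (cases k0)
      case 0
      obtain j where j: "i \<le> j" "j \<le> n" "dist (q 0) (q j) \<le> M1" using Pk0 w0 unfolding P_def 0 by auto
      have "\<bar>real 0 - real j\<bar> \<le> A * dist (q 0) (q j) + B" by (rule qgeo_D2[OF qg _ j(2)]) simp
      moreover have "A * dist (q 0) (q j) \<le> A * M1" using j(3) A0 by (rule mult_left_mono)
      ultimately have ri: "real i \<le> A * M1 + B" using j(1) by simp
      have "dist (q i) (q 0) \<le> L * \<bar>real i - real 0\<bar>" by (rule qgeo_D1[OF qg i]) simp
      also have "\<dots> \<le> L * (A * M1 + B)" using ri L0 by (simp add: mult_left_mono)
      also have "\<dots> \<le> L * (A * (2*M1+1) + B)" using L0 A0 M10
        by (intro mult_left_mono) (auto intro!: mult_left_mono)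
      finally have "dist (q i) (q 0) \<le> L * (A * (2*M1+1) + B)" .
      then show ?thesis using gp_le1[of "q i" "q 0" "q n"] M10 by linarith
    next
      case (Suc k1)
      have nP: "\<not> P k1" unfolding k0_def using Suc not_less_Least[of k1 P] k0_def by (metis lessI)
      have "dist (q 0) (w k1) + dist (w k1) (q n) = dist (q 0) (q n)" using wW[of k1] Suc k0K by simp
      then obtain j1 where j1: "j1 \<le> n" "dist (w k1) (q j1) \<le> M1" using M1 qg by blast
      have j1i: "j1 < i" using nP j1 unfolding P_def by (meson not_le)
      obtain j2 where j2: "i \<le> j2" "j2 \<le> n" "dist (w k0) (q j2) \<le> M1" using Pk0 unfolding P_def by auto
      have "dist (q j1) (q j2) \<le> dist (q j1) (w k1) + dist (w k1) (w k0) + dist (w k0) (q j2)"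
        by (metis dist_triangle order_trans add_right_mono)
      moreover have "dist (w k1) (w k0) \<le> 1" using wstep[of k1] Suc k0K by simp
      ultimately have dj: "dist (q j1) (q j2) \<le> 2*M1 + 1" using j1(2) j2(3) by (simp add: dist_commute)
      have "\<bar>real j1 - real j2\<bar> \<le> A * dist (q j1) (q j2) + B" by (rule qgeo_D2[OF qg j1(1) j2(2)])
      moreover have "A * dist (q j1) (q j2) \<le> A * (2*M1+1)" using dj A0 by (rule mult_left_mono)
      ultimately have "real i - real j1 \<le> A * (2*M1+1) + B" using j2(1) j1i by linarith
      moreover have "dist (q i) (q j1) \<le> L * \<bar>real i - real j1\<bar>" by (rule qgeo_D1[OF qg i j1(1)])
      moreover have "\<bar>real i - real j1\<bar> = real i - real j1" using j1i by simp
      ultimately have "dist (q i) (q j1) \<le> L * (real i - real j1)" by simp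
      also have "\<dots> \<le> L * (A * (2*M1+1) + B)" using \<open>real i - real j1 \<le> _\<close> L0 by (rule mult_left_mono)
      finally have "dist (q i) (q j1) \<le> L * (A * (2*M1+1) + B)" .
      then have "dist (q i) (w k1) \<le> M1 + L * (A * (2*M1+1) + B)"
        using j1(2) dist_triangle[of "q i" "w k1" "q j1"] by (simp add: dist_commute)
      moreover have "gp (w k1) (q 0) (q n) = 0"
        using wW[of k1] Suc k0K by (intro gp_geo_zero) simp
      ultimately show ?thesis using gp_base[of "q i" "q 0" "q n" "w k1"] by linarith
    qed
    then show "gp (q i) (q 0) (q n) \<le> H" unfolding H_def .
  qed
qed

locale setting =
  fixes G :: "('g, 'b) monoid_scheme" (structure) and S :: "'g set"
    and \<phi> :: "'g \<Rightarrow> 'x::metric_space \<Rightarrow> 'x" and x :: 'x and \<delta> :: real and k :: nat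
  assumes grp: "group G" and finS: "finite S" and Ssub: "S \<subseteq> carrier G" and gen: "generate G S = carrier G"
    and isoact: "isometric_action G \<phi>"
    and geo: "geodesic_space TYPE('x)"
    and d0: "\<delta> \<ge> 0" and hyp: "gromov_hyperbolic_on (UNIV::'x set) dist \<delta>"
    and prp: "proper_rel G S \<phi> x"
    and r2: "R2_cond G \<phi> x \<delta> k"
begin

sublocale group G by (rule grp)

abbreviation "T \<equiv> S \<union> stabilizer_pt G \<phi> x"
abbreviation "Lt \<equiv> T \<union> ((\<lambda>s. inv s) ` T)"
abbreviation "wl \<equiv> word_length G T"
abbreviation "dC \<equiv> cayley_dist G T"
definition prd :: "'g list \<Rightarrow> 'g" where "prd ws = foldr (\<lambda>a b. a \<otimes> b) ws \<one>"

lemma T_sub: "T \<subseteq> carrier G" using Ssub unfolding stabilizer_pt_def by auto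
lemma Lt_sub: "Lt \<subseteq> carrier G" using T_sub by auto
lemma Lt_inv: "a \<in> Lt \<Longrightarrow> inv a \<in> Lt" using T_sub by auto

lemma prd_closed: "set ws \<subseteq> carrier G \<Longrightarrow> prd ws \<in> carrier G"
  unfolding prd_def by (induction ws) auto

lemma prd_Nil[simp]: "prd [] = \<one>" unfolding prd_def by simp
lemma prd_Cons: "prd (a # ws) = a \<otimes> prd ws" unfolding prd_def by simp

lemma prd_append: "set ws \<subseteq> carrier G \<Longrightarrow> set vs \<subseteq> carrier G \<Longrightarrow> prd (ws @ vs) = prd ws \<otimes> prd vs"
proof (induction ws)
  case Nil then show ?case using prd_closed by simp
next
  case (Cons a ws) then show ?case using prd_closed by (simp add: prd_Cons m_assoc)
qed

lemma prd_rev_inv: "set ws \<subseteq> carrier G \<Longrightarrow> prd (rev (map (\<lambda>a. inv a) ws)) = inv (prd ws)"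
proof (induction ws)
  case Nil then show ?case by simp
next
  case (Cons a ws)
  have "prd (rev (map (\<lambda>a. inv a) (a # ws))) = prd (rev (map (\<lambda>a. inv a) ws) @ [inv a])" by simp
  also have "\<dots> = prd (rev (map (\<lambda>a. inv a) ws)) \<otimes> prd [inv a]" using Cons by (intro prd_append) auto
  also have "\<dots> = inv (prd ws) \<otimes> inv a" using Cons by (simp add: prd_Cons)
  also have "\<dots> = inv (a \<otimes> prd ws)" using Cons prd_closed by (simp add: inv_mult_group)
  finally show ?case by (simp add: prd_Cons)
qed

lemma word_exists: "g \<in> carrier G \<Longrightarrow> \<exists>ws. set ws \<subseteq> Lt \<and> prd ws = g"
proof -
  assume "g \<in> carrier G"
  then have "g \<in> generate G S" using gen by simp
  then show ?thesis
  proof (induction rule: generate.induct)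
    case one then show ?case by (intro exI[of _ "[]"]) simp
  next
    case (incl h) then show ?case using Ssub by (intro exI[of _ "[h]"]) (auto simp: prd_Cons)
  next
    case (inv h) then show ?case using Ssub by (intro exI[of _ "[inv h]"]) (auto simp: prd_Cons)
  next
    case (eng h1 h2)
    then obtain ws vs where w: "set ws \<subseteq> Lt" "prd ws = h1" "set vs \<subseteq> Lt" "prd vs = h2" by blast
    have "set ws \<subseteq> carrier G" "set vs \<subseteq> carrier G" using w Lt_sub by blast+
    then have "prd (ws @ vs) = h1 \<otimes> h2" using prd_append[of ws vs] w by simp
    then show ?case using w by (intro exI[of _ "ws @ vs"]) auto
  qed
qed

lemma wl_word: "g \<in> carrier G \<Longrightarrow> \<exists>ws. length ws = wl g \<and> set ws \<subseteq> Lt \<and> prd ws = g"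
proof -
  assume g: "g \<in> carrier G"
  obtain ws where ws: "set ws \<subseteq> Lt" "prd ws = g" using word_exists[OF g] by blast
  let ?P = "\<lambda>n. \<exists>ws. length ws = n \<and> set ws \<subseteq> T \<union> ((\<lambda>s. inv s) ` T) \<and> foldr (\<lambda>a b. a \<otimes> b) ws \<one> = g"
  have "?P (length ws)" using ws unfolding prd_def by blast
  then have "?P (LEAST n. ?P n)" by (rule LeastI)
  then show ?thesis unfolding word_length_def prd_def by blast
qed

lemma wl_le: "set ws \<subseteq> Lt \<Longrightarrow> wl (prd ws) \<le> length ws"
  unfolding word_length_def prd_def by (rule Least_le) blast

lemma wl_one: "wl \<one> = 0"
  using wl_le[of "[]"] by simp

lemma wl_mult: "g \<in> carrier G \<Longrightarrow> h \<in> carrier G \<Longrightarrow> wl (g \<otimes> h) \<le> wl g + wl h"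
proof -
  assume g: "g \<in> carrier G" and h: "h \<in> carrier G"
  obtain ws where ws: "length ws = wl g" "set ws \<subseteq> Lt" "prd ws = g" using wl_word[OF g] by blast
  obtain vs where vs: "length vs = wl h" "set vs \<subseteq> Lt" "prd vs = h" using wl_word[OF h] by blast
  have "set ws \<subseteq> carrier G" "set vs \<subseteq> carrier G" using ws vs Lt_sub by blast+
  then have "prd (ws @ vs) = g \<otimes> h" using prd_append[of ws vs] ws vs by simp
  moreover have "wl (prd (ws @ vs)) \<le> length (ws @ vs)" using ws vs by (intro wl_le) auto
  ultimately show ?thesis using ws vs by simp
qed

lemma wl_inv: "g \<in> carrier G \<Longrightarrow> wl (inv g) \<le> wl g"
proof -
  assume g: "g \<in> carrier G"
  obtain ws where ws: "length ws = wl g" "set ws \<subseteq> Lt" "prd ws = g" using wl_word[OF g] by blast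
  have "prd (rev (map (\<lambda>a. inv a) ws)) = inv g" using ws Lt_sub prd_rev_inv[of ws] by auto
  moreover have "set (rev (map (\<lambda>a. inv a) ws)) \<subseteq> Lt" using ws Lt_inv by auto
  ultimately show ?thesis using wl_le[of "rev (map (\<lambda>a. inv a) ws)"] ws by simp
qed

lemma dC_def': "dC g h = real (wl (inv g \<otimes> h))" unfolding cayley_dist_def by simp

lemma dC_nonneg: "0 \<le> dC g h" unfolding dC_def' by simp

lemma dC_refl: "g \<in> carrier G \<Longrightarrow> dC g g = 0" unfolding dC_def' by (simp add: wl_one)

lemma dC_sym: "g \<in> carrier G \<Longrightarrow> h \<in> carrier G \<Longrightarrow> dC g h = dC h g"
proof -
  assume g: "g \<in> carrier G" and h: "h \<in> carrier G"
  have e: "inv (inv g \<otimes> h) = inv h \<otimes> g" using g h by (simp add: inv_mult_group)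
  have e2: "inv (inv h \<otimes> g) = inv g \<otimes> h" using g h by (simp add: inv_mult_group)
  have "wl (inv h \<otimes> g) \<le> wl (inv g \<otimes> h)" using wl_inv[of "inv g \<otimes> h"] e g h by simp
  moreover have "wl (inv g \<otimes> h) \<le> wl (inv h \<otimes> g)" using wl_inv[of "inv h \<otimes> g"] e2 g h by simp
  ultimately show ?thesis unfolding dC_def' by simp
qed

lemma dC_tri: "g \<in> carrier G \<Longrightarrow> h \<in> carrier G \<Longrightarrow> m \<in> carrier G \<Longrightarrow> dC g h \<le> dC g m + dC m h"
proof -
  assume g: "g \<in> carrier G" and h: "h \<in> carrier G" and m: "m \<in> carrier G"
  have "inv g \<otimes> h = (inv g \<otimes> m) \<otimes> (inv m \<otimes> h)" using g h m
    by (simp add: m_assoc[symmetric]) (simp add: m_assoc r_inv)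
  then have "wl (inv g \<otimes> h) \<le> wl (inv g \<otimes> m) + wl (inv m \<otimes> h)"
    using wl_mult[of "inv g \<otimes> m" "inv m \<otimes> h"] g h m by simp
  then show ?thesis unfolding dC_def' by simp
qed

lemma dC_lmult: "f \<in> carrier G \<Longrightarrow> g \<in> carrier G \<Longrightarrow> h \<in> carrier G \<Longrightarrow> dC (f \<otimes> g) (f \<otimes> h) = dC g h"
proof -
  assume f: "f \<in> carrier G" and g: "g \<in> carrier G" and h: "h \<in> carrier G"
  have "inv (f \<otimes> g) \<otimes> (f \<otimes> h) = inv g \<otimes> h" using f g h
    by (simp add: inv_mult_group m_assoc) (simp add: m_assoc[symmetric])
  then show ?thesis unfolding dC_def' by simp
qed

lemma dC_one: "g \<in> carrier G \<Longrightarrow> dC \<one> g = real (wl g)" unfolding dC_def' by simp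

definition geoC :: "(nat \<Rightarrow> 'g) \<Rightarrow> nat \<Rightarrow> bool" where
  "geoC p n \<longleftrightarrow> (\<forall>i. p i \<in> carrier G) \<and> (\<forall>i\<le>n. \<forall>j\<le>n. dC (p i) (p j) = \<bar>real i - real j\<bar>)"

lemma geoC_exists:
  assumes g: "g \<in> carrier G" and h: "h \<in> carrier G"
  shows "\<exists>p n. geoC p n \<and> p 0 = g \<and> p n = h"
proof -
  define n where "n = wl (inv g \<otimes> h)"
  obtain ws where ws: "length ws = n" "set ws \<subseteq> Lt" "prd ws = inv g \<otimes> h"
    using wl_word[of "inv g \<otimes> h"] g h unfolding n_def by auto
  have wsc: "set ws \<subseteq> carrier G" using ws Lt_sub by blast
  define p where "p i = g \<otimes> prd (take i ws)" for i
  have pc: "p i \<in> carrier G" for i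
  proof -
    have "set (take i ws) \<subseteq> carrier G" using wsc by (meson order_trans set_take_subset)
    then show ?thesis unfolding p_def using g prd_closed by simp
  qed
  have p0: "p 0 = g" unfolding p_def using g by simp
  have pn: "p n = h" unfolding p_def using ws g h by (simp add: m_assoc[symmetric])
  have upper: "dC (p i) (p j) \<le> real j - real i" if ij: "i \<le> j" "j \<le> n" for i j
  proof -
    define r where "r = take (j - i) (drop i ws)"
    have tj: "take j ws = take i ws @ r" unfolding r_def using take_add[of i "j - i" ws] ij by simp
    have c1: "set (take i ws) \<subseteq> carrier G" using wsc by (meson order_trans set_take_subset)
    have c2: "set r \<subseteq> carrier G" unfolding r_def using wsc
      by (meson order_trans set_take_subset set_drop_subset)
    have l2: "set r \<subseteq> Lt" unfolding r_def using ws(2)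
      by (meson order_trans set_take_subset set_drop_subset)
    have pj: "p j = g \<otimes> (prd (take i ws) \<otimes> prd r)" unfolding p_def tj using prd_append[OF c1 c2] by simp
    have "dC (p i) (p j) = dC (g \<otimes> prd (take i ws)) (g \<otimes> (prd (take i ws) \<otimes> prd r))"
      using pj by (simp add: p_def)
    also have "\<dots> = dC (prd (take i ws)) (prd (take i ws) \<otimes> prd r)"
      using g prd_closed[OF c1] prd_closed[OF c2] by (intro dC_lmult) auto
    also have "\<dots> = dC (prd (take i ws) \<otimes> \<one>) (prd (take i ws) \<otimes> prd r)"
      using prd_closed[OF c1] by simp
    also have "\<dots> = dC \<one> (prd r)" using prd_closed[OF c1] prd_closed[OF c2] by (intro dC_lmult) auto
    also have "\<dots> = real (wl (prd r))" using prd_closed[OF c2] by (simp add: dC_one)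
    also have "\<dots> \<le> real (length r)" using wl_le[OF l2] by simp
    also have "\<dots> = real j - real i" unfolding r_def using ws(1) ij by simp
    finally show ?thesis .
  qed
  have eq: "dC (p i) (p j) = real j - real i" if ij: "i \<le> j" "j \<le> n" for i j
  proof -
    have "real n = dC g h" unfolding n_def dC_def' by simp
    also have "\<dots> \<le> dC g (p i) + dC (p i) h" using g h pc by (intro dC_tri) auto
    also have "\<dots> \<le> dC g (p i) + (dC (p i) (p j) + dC (p j) h)" using h pc by (simp add: dC_tri)
    finally have "real n \<le> dC (p 0) (p i) + dC (p i) (p j) + dC (p j) (p n)" using p0 pn by simp
    moreover have "dC (p 0) (p i) \<le> real i - real 0" using upper[of 0 i] ij by simp
    moreover have "dC (p j) (p n) \<le> real n - real j" using upper[of j n] ij by simp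
    ultimately have "real j - real i \<le> dC (p i) (p j)" by simp
    then show ?thesis using upper[OF ij] by simp
  qed
  have "geoC p n" unfolding geoC_def
  proof (intro conjI allI impI)
    fix i j assume i: "i \<le> n" and j: "j \<le> n"
    show "dC (p i) (p j) = \<bar>real i - real j\<bar>"
    proof (cases "i \<le> j")
      case True then show ?thesis using eq[OF True j] by simp
    next
      case False
      then have "dC (p j) (p i) = real i - real j" using eq[of j i] i by simp
      then show ?thesis using False dC_sym[OF pc pc, of i j] by simp
    qed
  qed (rule pc)
  then show ?thesis using p0 pn by blast
qed

lemma act: "group_action G UNIV \<phi>" using isoact unfolding isometric_action_def by simp

lemma act_mult: "g \<in> carrier G \<Longrightarrow> h \<in> carrier G \<Longrightarrow> \<phi> (g \<otimes> h) y = \<phi> g (\<phi> h y)"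
  using group_action.composition_rule[OF act] by simp

lemma act_one: "\<phi> \<one> y = y"
  using group_action.id_eq_one[OF act] by (metis UNIV_I restrict_apply')

lemma act_iso: "g \<in> carrier G \<Longrightarrow> dist (\<phi> g y) (\<phi> g z) = dist y z"
  using isoact unfolding isometric_action_def by simp

lemma act_inv: "g \<in> carrier G \<Longrightarrow> dist (\<phi> g y) z = dist y (\<phi> (inv g) z)"
proof -
  assume g: "g \<in> carrier G"
  have "dist (\<phi> g y) z = dist (\<phi> (inv g) (\<phi> g y)) (\<phi> (inv g) z)" using g by (simp add: act_iso)
  also have "\<phi> (inv g) (\<phi> g y) = y" using g act_mult[of "inv g" g y] by (simp add: act_one)
  finally show ?thesis .
qed

definition Lc :: real where "Lc = Max (insert 0 ((\<lambda>s. dist x (\<phi> s x)) ` S))"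

lemma Lc0: "0 \<le> Lc" unfolding Lc_def using finS by simp

lemma letter_L: "a \<in> Lt \<Longrightarrow> dist x (\<phi> a x) \<le> Lc"
proof -
  have S: "dist x (\<phi> s x) \<le> Lc" if "s \<in> S" for s unfolding Lc_def using finS that by simp
  have st: "dist x (\<phi> s x) = 0" if "s \<in> stabilizer_pt G \<phi> x" for s
    using that unfolding stabilizer_pt_def by simp
  assume a: "a \<in> Lt"
  then consider "a \<in> S" | "a \<in> stabilizer_pt G \<phi> x" | s where "s \<in> S" "a = inv s"
    | s where "s \<in> stabilizer_pt G \<phi> x" "a = inv s" by blast
  then show ?thesis
  proof cases
    case 1 then show ?thesis using S by simp
  next
    case 2 then show ?thesis using st Lc0 by simp
  next
    case 3
    then have "s \<in> carrier G" using Ssub by auto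
    then have "dist x (\<phi> a x) = dist (\<phi> s x) x" using 3 act_inv[of s x x] by simp
    then show ?thesis using S[OF 3(1)] by (simp add: dist_commute)
  next
    case 4
    then have "s \<in> carrier G" unfolding stabilizer_pt_def by auto
    then have "dist x (\<phi> a x) = dist (\<phi> s x) x" using 4 act_inv[of s x x] by simp
    then show ?thesis using st[OF 4(1)] Lc0 by (simp add: dist_commute)
  qed
qed

lemma word_L: "set ws \<subseteq> Lt \<Longrightarrow> dist x (\<phi> (prd ws) x) \<le> Lc * real (length ws)"
proof (induction ws)
  case Nil then show ?case by (simp add: act_one)
next
  case (Cons a ws)
  have a: "a \<in> carrier G" "a \<in> Lt" using Cons Lt_sub by auto
  have wc: "prd ws \<in> carrier G" using Cons Lt_sub by (intro prd_closed) auto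
  have "dist x (\<phi> (prd (a # ws)) x) = dist x (\<phi> a (\<phi> (prd ws) x))"
    by (simp add: prd_Cons act_mult[OF a(1) wc])
  also have "\<dots> \<le> dist x (\<phi> a x) + dist (\<phi> a x) (\<phi> a (\<phi> (prd ws) x))" by (rule dist_triangle)
  also have "\<dots> = dist x (\<phi> a x) + dist x (\<phi> (prd ws) x)" using a by (simp add: act_iso)
  also have "\<dots> \<le> Lc + Lc * real (length ws)" using letter_L[OF a(2)] Cons by simp
  finally show ?case by (simp add: algebra_simps)
qed

lemma lip: "g \<in> carrier G \<Longrightarrow> h \<in> carrier G \<Longrightarrow> dist (\<phi> g x) (\<phi> h x) \<le> Lc * dC g h"
proof -
  assume g: "g \<in> carrier G" and h: "h \<in> carrier G"
  obtain ws where ws: "length ws = wl (inv g \<otimes> h)" "set ws \<subseteq> Lt" "prd ws = inv g \<otimes> h"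
    using wl_word[of "inv g \<otimes> h"] g h by auto
  have "dist (\<phi> g x) (\<phi> h x) = dist x (\<phi> (inv g) (\<phi> h x))" using g by (rule act_inv)
  also have "\<dots> = dist x (\<phi> (inv g \<otimes> h) x)" using g h by (simp add: act_mult)
  also have "\<dots> \<le> Lc * real (length ws)" using word_L[OF ws(2)] ws(3) by simp
  finally show ?thesis using ws(1) unfolding dC_def' by simp
qed

lemma properC: "\<exists>R. \<forall>g\<in>carrier G. \<forall>h\<in>carrier G. dist (\<phi> g x) (\<phi> h x) \<le> c \<longrightarrow> dC g h \<le> R"
proof -
  obtain R where R: "\<forall>g\<in>{g\<in>carrier G. dist x (\<phi> g x) \<le> real (nat \<lceil>c\<rceil>)}. dC \<one> g \<le> R"
    using prp unfolding proper_rel_def by blast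
  have "dC g h \<le> R" if g: "g \<in> carrier G" and h: "h \<in> carrier G" and d: "dist (\<phi> g x) (\<phi> h x) \<le> c" for g h
  proof -
    have "dist x (\<phi> (inv g \<otimes> h) x) = dist (\<phi> g x) (\<phi> h x)"
      using g h act_inv[of g x "\<phi> h x"] by (simp add: act_mult)
    also have "\<dots> \<le> real (nat \<lceil>c\<rceil>)" using d by linarith
    finally have "dC \<one> (inv g \<otimes> h) \<le> R" using R g h by auto
    then show ?thesis using g h unfolding dC_def' by simp
  qed
  then show ?thesis by blast
qed

lemma linear_bound:
  "\<exists>A B. 0 \<le> A \<and> 0 \<le> B \<and> (\<forall>g\<in>carrier G. \<forall>h\<in>carrier G. dC g h \<le> A * dist (\<phi> g x) (\<phi> h x) + B)"
proof -
  define kd where "kd = real k * \<delta>"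
  have kd0: "0 \<le> kd" unfolding kd_def using d0 by simp
  define E where "E = 1 + 2*kd + Lc"
  define D0 where "D0 = 1 + kd + Lc"
  obtain RE where RE: "\<forall>g\<in>carrier G. \<forall>h\<in>carrier G. dist (\<phi> g x) (\<phi> h x) \<le> E \<longrightarrow> dC g h \<le> RE"
    using properC by blast
  obtain R0 where R0: "\<forall>g\<in>carrier G. \<forall>h\<in>carrier G. dist (\<phi> g x) (\<phi> h x) \<le> D0 \<longrightarrow> dC g h \<le> R0"
    using properC by blast
  have RE0: "0 \<le> RE" using RE[rule_format, of \<one> \<one>] kd0 Lc0 by (simp add: E_def dC_refl)
  have R00: "0 \<le> R0" using R0[rule_format, of \<one> \<one>] kd0 Lc0 by (simp add: D0_def dC_refl)
  have claim: "\<forall>g\<in>carrier G. dist x (\<phi> g x) < real n \<longrightarrow> dC \<one> g \<le> R0 + real n * RE" for n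
  proof (induction n)
    case 0 then show ?case by simp
  next
    case (Suc n)
    show ?case
    proof (intro ballI impI)
      fix g assume g: "g \<in> carrier G" and Dn: "dist x (\<phi> g x) < real (Suc n)"
      define D where "D = dist x (\<phi> g x)"
      show "dC \<one> g \<le> R0 + real (Suc n) * RE"
      proof (cases "D \<le> D0")
        case True
        then have "dC \<one> g \<le> R0" using R0 g by (simp add: act_one D_def)
        then show ?thesis using RE0 by (simp add: add_increasing2)
      next
        case False
        obtain p m where pm: "geoC p m" "p 0 = \<one>" "p m = g" using geoC_exists[of \<one> g] g by auto
        have pc: "p i \<in> carrier G" for i using pm(1) unfolding geoC_def by simp
        define b where "b i = gp x (\<phi> g x) (\<phi> (p i) x)" for i
        have bm: "b m = D" unfolding b_def gromov_prod_def D_def using pm(3) by (simp add: dist_commute)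
        have b0: "b 0 = 0" unfolding b_def gromov_prod_def using pm(2) by (simp add: act_one dist_commute)
        define \<theta> where "\<theta> = D - 1 - kd - Lc"
        have th0: "0 < \<theta>" using False unfolding \<theta>_def D0_def by simp
        define i0 where "i0 = (LEAST i. \<theta> \<le> b i)"
        have Pm: "\<theta> \<le> b m" using bm unfolding \<theta>_def using kd0 Lc0 by simp
        have Pi0: "\<theta> \<le> b i0" unfolding i0_def using Pm by (rule LeastI)
        have i0m: "i0 \<le> m" unfolding i0_def using Pm by (rule Least_le)
        have "i0 \<noteq> 0"
        proof
          assume "i0 = 0" then show False using Pi0 b0 th0 by simp
        qed
        then obtain i1 where i1: "i0 = Suc i1" by (cases i0) auto
        have bi1: "b i1 < \<theta>" unfolding i0_def using not_less_Least[of i1 "\<lambda>i. \<theta> \<le> b i"] i1 i0_def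
          by (metis lessI not_le)
        have "b i0 \<le> b i1 + dist (\<phi> (p i0) x) (\<phi> (p i1) x)" unfolding b_def by (rule gp_lip3)
        moreover have "dist (\<phi> (p i0) x) (\<phi> (p i1) x) \<le> Lc * dC (p i0) (p i1)" using pc[of i0] pc[of i1] by (rule lip)
        moreover have "dC (p i0) (p i1) = 1" using pm(1) i0m i1 unfolding geoC_def by auto
        ultimately have bi0: "b i0 < \<theta> + Lc" using bi1 by simp
        define h where "h = p i0"
        have h: "h \<in> carrier G" unfolding h_def by (rule pc)
        obtain u where u: "u \<in> carrier G"
          "dist x (\<phi> u x) \<le> gp x (\<phi> g x) (\<phi> h x) + real k * \<delta>"
          "dist x (\<phi> (inv u \<otimes> g) x) \<le> gp x (\<phi> (inv g) x) (\<phi> (inv g \<otimes> h) x) + real k * \<delta>"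
          using r2 g h unfolding R2_cond_def by blast
        have e1: "dist x (\<phi> (inv u \<otimes> g) x) = dist (\<phi> u x) (\<phi> g x)"
          using act_inv[of u x "\<phi> g x"] u(1) g by (simp add: act_mult)
        have f1: "dist (\<phi> (inv g) x) x = dist x (\<phi> g x)" using act_inv[of "inv g" x x] g by simp
        have f2: "dist (\<phi> (inv g \<otimes> h) x) x = dist (\<phi> h x) (\<phi> g x)"
          using act_inv[of "inv g" "\<phi> h x" x] g h by (simp add: act_mult)
        have f3: "dist (\<phi> (inv g) x) (\<phi> (inv g \<otimes> h) x) = dist x (\<phi> h x)"
          using g h by (simp add: act_mult act_iso)
        have e2: "gp x (\<phi> (inv g) x) (\<phi> (inv g \<otimes> h) x) = D - b i0"
          unfolding gromov_prod_def b_def D_def h_def[symmetric] f1 f2 f3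
          by (simp add: dist_commute field_simps)
        have "dist (\<phi> u x) (\<phi> g x) \<le> E" using u(3) e1 e2 Pi0 unfolding E_def \<theta>_def kd_def by simp
        then have dug: "dC u g \<le> RE" using RE u(1) g by simp
        have "dist x (\<phi> u x) < real n" using u(2) bi0 Dn unfolding b_def h_def \<theta>_def kd_def D_def by simp
        then have "dC \<one> u \<le> R0 + real n * RE" using Suc u(1) by simp
        moreover have "dC \<one> g \<le> dC \<one> u + dC u g" using u(1) g by (intro dC_tri) auto
        ultimately show ?thesis using dug by (simp add: algebra_simps)
      qed
    qed
  qed
  have "dC g h \<le> RE * dist (\<phi> g x) (\<phi> h x) + (R0 + RE)" if g: "g \<in> carrier G" and h: "h \<in> carrier G" for g h
  proof -
    define Dg where "Dg = dist (\<phi> g x) (\<phi> h x)"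
    have e: "dist x (\<phi> (inv g \<otimes> h) x) = Dg" unfolding Dg_def
      using g h act_inv[of g x "\<phi> h x"] by (simp add: act_mult)
    define n where "n = nat \<lfloor>Dg\<rfloor> + 1"
    have n1: "Dg < real n" unfolding n_def by linarith
    have n2: "real n \<le> Dg + 1" unfolding n_def Dg_def by (simp add: of_nat_nat)
    have "dC \<one> (inv g \<otimes> h) \<le> R0 + real n * RE" using claim[of n] e n1 g h by simp
    moreover have "dC \<one> (inv g \<otimes> h) = dC g h" using g h by (simp add: dC_def')
    moreover have "real n * RE \<le> (Dg + 1) * RE" using n2 RE0 by (rule mult_right_mono)
    ultimately show ?thesis unfolding Dg_def by (simp add: algebra_simps)
  qed
  then show ?thesis using RE0 R00 by (intro exI[of _ RE] exI[of _ "R0 + RE"]) auto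
qed

lemma slimC:
  "\<exists>K0. 0 \<le> K0 \<and> (\<forall>Q nq R nr P np. geoC Q nq \<and> geoC R nr \<and> geoC P np \<and> R 0 = Q 0 \<and> P 0 = Q nq \<and> P np = R nr \<longrightarrow>
     (\<forall>t\<le>nq. (\<exists>i\<le>nr. dC (Q t) (R i) \<le> K0) \<or> (\<exists>i\<le>np. dC (Q t) (P i) \<le> K0)))"
proof -
  obtain A B where AB: "0 \<le> A" "0 \<le> B" "\<forall>g\<in>carrier G. \<forall>h\<in>carrier G. dC g h \<le> A * dist (\<phi> g x) (\<phi> h x) + B"
    using linear_bound by blast
  have qg: "qgeo (\<lambda>i. \<phi> (p i) x) n Lc A B" if "geoC p n" for p n
    unfolding qgeo_def
  proof (intro allI impI conjI)
    fix i j assume i: "i \<le> n" and j: "j \<le> n"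
    have pc: "p i \<in> carrier G" "p j \<in> carrier G" using that unfolding geoC_def by auto
    have e: "dC (p i) (p j) = \<bar>real i - real j\<bar>" using that i j unfolding geoC_def by auto
    show "dist (\<phi> (p i) x) (\<phi> (p j) x) \<le> Lc * \<bar>real i - real j\<bar>" using lip[OF pc] e by simp
    show "\<bar>real i - real j\<bar> \<le> A * dist (\<phi> (p i) x) (\<phi> (p j) x) + B" using AB(3)[rule_format, OF pc] e by simp
  qed
  obtain H2 where H2: "\<forall>n (q::nat \<Rightarrow> 'x). qgeo q n Lc A B \<longrightarrow> (\<forall>i\<le>n. gp (q i) (q 0) (q n) \<le> H2)"
    using morse2[OF hyp d0 geo Lc0 AB(1,2)] by blast
  obtain M where M: "\<forall>n (q::nat \<Rightarrow> 'x). qgeo q n Lc A B \<longrightarrow>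
    (\<forall>w. gp w (q 0) (q n) \<le> H2 + \<delta> \<longrightarrow> (\<exists>i\<le>n. dist w (q i) \<le> M))"
    using morse1_gen[OF hyp d0 geo Lc0 AB(1,2)] by blast
  obtain K1 where K1: "\<forall>g\<in>carrier G. \<forall>h\<in>carrier G. dist (\<phi> g x) (\<phi> h x) \<le> M \<longrightarrow> dC g h \<le> K1"
    using properC by blast
  define K0 where "K0 = max K1 0"
  have main: "(\<exists>i\<le>nr. dC (Q t) (R i) \<le> K0) \<or> (\<exists>i\<le>np. dC (Q t) (P i) \<le> K0)"
    if h: "geoC Q nq" "geoC R nr" "geoC P np" "R 0 = Q 0" "P 0 = Q nq" "P np = R nr" and t: "t \<le> nq"
    for Q nq R nr P np t
  proof -
    have Qc: "Q i \<in> carrier G" "R i \<in> carrier G" "P i \<in> carrier G" for i using h unfolding geoC_def by auto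
    define V where "V = \<phi> (Q t) x"
    define a' where "a' = \<phi> (Q 0) x"
    define y' where "y' = \<phi> (Q nq) x"
    define z' where "z' = \<phi> (R nr) x"
    have "gp V a' y' \<le> H2" using H2 qg[OF h(1)] t unfolding V_def a'_def y'_def by blast
    moreover have "min (gp V a' z') (gp V z' y') - \<delta> \<le> gp V a' y'" by (rule four_point[OF hyp])
    ultimately have "gp V a' z' \<le> H2 + \<delta> \<or> gp V y' z' \<le> H2 + \<delta>" using gp_sym[of V z' y'] by linarith
    then show ?thesis
    proof
      assume "gp V a' z' \<le> H2 + \<delta>"
      then have "gp V (\<phi> (R 0) x) (\<phi> (R nr) x) \<le> H2 + \<delta>" using h(4) unfolding a'_def z'_def by simp
      then obtain i where i: "i \<le> nr" "dist V (\<phi> (R i) x) \<le> M" using M qg[OF h(2)] by blast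
      then have "dC (Q t) (R i) \<le> K1" using K1 Qc unfolding V_def by blast
      then show ?thesis using i unfolding K0_def by auto
    next
      assume "gp V y' z' \<le> H2 + \<delta>"
      then have "gp V (\<phi> (P 0) x) (\<phi> (P np) x) \<le> H2 + \<delta>" using h(5,6) unfolding y'_def z'_def by simp
      then obtain i where i: "i \<le> np" "dist V (\<phi> (P i) x) \<le> M" using M qg[OF h(3)] by blast
      then have "dC (Q t) (P i) \<le> K1" using K1 Qc unfolding V_def by blast
      then show ?thesis using i unfolding K0_def by auto
    qed
  qed
  have "0 \<le> K0" unfolding K0_def by simp
  then show ?thesis using main by blast
qed

lemma geoC_d: "geoC p n \<Longrightarrow> i \<le> n \<Longrightarrow> j \<le> n \<Longrightarrow> dC (p i) (p j) = \<bar>real i - real j\<bar>"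
  unfolding geoC_def by blast

lemma geoC_c: "geoC p n \<Longrightarrow> p i \<in> carrier G"
  unfolding geoC_def by blast

lemma nearC:
  "\<exists>K. 0 \<le> K \<and> (\<forall>P np. geoC P np \<longrightarrow> (\<forall>a\<in>carrier G. \<exists>i\<le>np. dC a (P i) \<le> gromov_prod dC a (P 0) (P np) + K))"
proof -
  obtain K0 where K0: "0 \<le> K0" "\<forall>Q nq R nr P np. geoC Q nq \<and> geoC R nr \<and> geoC P np \<and> R 0 = Q 0 \<and> P 0 = Q nq \<and> P np = R nr \<longrightarrow>
     (\<forall>t\<le>nq. (\<exists>i\<le>nr. dC (Q t) (R i) \<le> K0) \<or> (\<exists>i\<le>np. dC (Q t) (P i) \<le> K0))"
    using slimC by blast
  have "\<exists>i\<le>np. dC a (P i) \<le> gromov_prod dC a (P 0) (P np) + (1 + 2*K0)"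
    if P: "geoC P np" and a: "a \<in> carrier G" for P np a
  proof -
    define y where "y = P 0"
    define z where "z = P np"
    have yc: "y \<in> carrier G" "z \<in> carrier G" unfolding y_def z_def using geoC_c[OF P] by auto
    obtain Q nq where Q: "geoC Q nq" "Q 0 = a" "Q nq = y" using geoC_exists[OF a yc(1)] by blast
    obtain R nr where R: "geoC R nr" "R 0 = a" "R nr = z" using geoC_exists[OF a yc(2)] by blast
    have slim: "(\<exists>i\<le>nr. dC (Q t) (R i) \<le> K0) \<or> (\<exists>i\<le>np. dC (Q t) (P i) \<le> K0)" if "t \<le> nq" for t
      using K0(2) Q R P that unfolding y_def z_def by (metis (no_types, lifting))
    have Qc: "Q i \<in> carrier G" "R i \<in> carrier G" "P i \<in> carrier G" for i
      using geoC_c Q(1) R(1) P by auto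
    have dya: "dC y a = real nq" using geoC_d[OF Q(1), of nq 0] Q by simp
    have dza: "dC z a = real nr" using geoC_d[OF R(1), of nr 0] R by simp
    have gpdef: "gromov_prod dC a y z = (dC y a + dC z a - dC y z) / 2" unfolding gromov_prod_def ..
    have gp0: "0 \<le> gromov_prod dC a y z"
    proof -
      have "dC y z \<le> dC y a + dC a z" using yc a by (intro dC_tri) auto
      moreover have "dC a z = dC z a" using yc a by (intro dC_sym) auto
      ultimately show ?thesis unfolding gpdef by simp
    qed
    define Pset where "Pset t \<longleftrightarrow> (\<exists>i\<le>np. dC (Q t) (P i) \<le> K0)" for t
    have Pnq: "Pset nq" unfolding Pset_def using Q(3) yc K0(1) dC_refl[of y]
      by (intro exI[of _ 0]) (auto simp: y_def)
    define t0 where "t0 = (LEAST t. Pset t)"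
    have Pt0: "Pset t0" unfolding t0_def using Pnq by (rule LeastI)
    have t0nq: "t0 \<le> nq" unfolding t0_def using Pnq by (rule Least_le)
    obtain j where j: "j \<le> np" "dC (Q t0) (P j) \<le> K0" using Pt0 unfolding Pset_def by blast
    have daq: "dC a (Q t0) = real t0" using geoC_d[OF Q(1), of 0 t0] Q t0nq by simp
    have dap: "dC a (P j) \<le> real t0 + K0"
      using dC_tri[of a "P j" "Q t0"] a Qc daq j by simp
    show ?thesis
    proof (cases t0)
      case 0
      then have "dC a (P j) \<le> K0" using dap by simp
      then show ?thesis using j gp0 K0(1) unfolding y_def z_def by (intro exI[of _ j]) auto
    next
      case (Suc t1)
      have nP: "\<not> Pset t1" unfolding t0_def using Suc not_less_Least[of t1 Pset] t0_def by (metis lessI)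
      then obtain i where i: "i \<le> nr" "dC (Q t1) (R i) \<le> K0" using slim[of t1] Suc t0nq unfolding Pset_def by auto
      have dyq: "dC y (Q t0) = real nq - real t0" using geoC_d[OF Q(1), of nq t0] Q t0nq by simp
      have dqq: "dC (Q t0) (Q t1) = 1" using geoC_d[OF Q(1), of t0 t1] Suc t0nq by simp
      have drz: "dC (R i) z = real nr - real i" using geoC_d[OF R(1), of i nr] R i by simp
      have dar: "dC a (R i) = real i" using geoC_d[OF R(1), of 0 i] R i by simp
      have daq1: "dC a (Q t1) = real t1" using geoC_d[OF Q(1), of 0 t1] Q Suc t0nq by simp
      have t1a: "dC a (Q t1) \<le> dC a (R i) + dC (R i) (Q t1)" using a Qc by (intro dC_tri) auto
      have sym1: "dC (R i) (Q t1) = dC (Q t1) (R i)" using Qc by (intro dC_sym) auto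
      have tri: "dC y z \<le> dC y (Q t0) + dC (Q t0) (Q t1) + dC (Q t1) (R i) + dC (R i) z"
      proof -
        have "dC y z \<le> dC y (Q t0) + dC (Q t0) z" using yc Qc by (intro dC_tri) auto
        moreover have "dC (Q t0) z \<le> dC (Q t0) (Q t1) + dC (Q t1) z" using yc Qc by (intro dC_tri) auto
        moreover have "dC (Q t1) z \<le> dC (Q t1) (R i) + dC (R i) z" using yc Qc by (intro dC_tri) auto
        ultimately show ?thesis by linarith
      qed
      have "real t0 \<le> gromov_prod dC a y z + 1 + K0"
      proof -
        have "real t0 = real t1 + 1" using Suc by simp
        moreover have "2 * gromov_prod dC a y z = dC y a + dC z a - dC y z" unfolding gpdef by simp
        ultimately show ?thesis using dya dza dyq dqq drz dar daq1 t1a sym1 tri i(2) by linarith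
      qed
      then show ?thesis using j dap unfolding y_def z_def by (intro exI[of _ j]) auto
    qed
  qed
  then show ?thesis using K0(1) by (intro exI[of _ "1 + 2*K0"]) auto
qed

lemma hypC: "\<exists>\<delta>'. gromov_hyperbolic_on (carrier G) dC \<delta>'"
proof -
  obtain K where K: "0 \<le> K" "\<forall>P np. geoC P np \<longrightarrow> (\<forall>a\<in>carrier G. \<exists>i\<le>np. dC a (P i) \<le> gromov_prod dC a (P 0) (P np) + K)"
    using nearC by blast
  have "gromov_prod dC w y z \<ge> min (gromov_prod dC w y u) (gromov_prod dC w u z) - 2*K"
    if c: "w \<in> carrier G" "y \<in> carrier G" "z \<in> carrier G" "u \<in> carrier G" for w y z u
  proof -
    obtain P np where P: "geoC P np" "P 0 = y" "P np = z" using geoC_exists[OF c(2,3)] by blast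
    have Pc: "P i \<in> carrier G" for i using geoC_c[OF P(1)] .
    obtain i where i: "i \<le> np" "dC w (P i) \<le> gromov_prod dC w y z + K" using K(2) P c(1) by blast
    obtain j where j: "j \<le> np" "dC u (P j) \<le> gromov_prod dC u y z + K" using K(2) P c(4) by blast
    define p where "p = P i"
    define p' where "p' = P j"
    have pc: "p \<in> carrier G" "p' \<in> carrier G" unfolding p_def p'_def using Pc by auto
    have g1: "2 * gromov_prod dC w y z = dC y w + dC z w - dC y z" unfolding gromov_prod_def by simp
    have g2: "2 * gromov_prod dC w y u = dC y w + dC u w - dC y u" unfolding gromov_prod_def by simp
    have g3: "2 * gromov_prod dC w u z = dC u w + dC z w - dC u z" unfolding gromov_prod_def by simp
    have g4: "2 * gromov_prod dC u y z = dC y u + dC z u - dC y z" unfolding gromov_prod_def by simp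
    have e1: "dC y p = real i" using geoC_d[OF P(1), of 0 i] P i unfolding p_def by simp
    have e2: "dC p z = real np - real i" using geoC_d[OF P(1), of i np] P i unfolding p_def by simp
    have e3: "dC y p' = real j" using geoC_d[OF P(1), of 0 j] P j unfolding p'_def by simp
    have e4: "dC p' z = real np - real j" using geoC_d[OF P(1), of j np] P j unfolding p'_def by simp
    have e5: "dC y z = real np" using geoC_d[OF P(1), of 0 np] P by simp
    have e6: "dC p p' = \<bar>real i - real j\<bar>" using geoC_d[OF P(1), of i j] i j unfolding p_def p'_def by simp
    have s1: "dC p' p = dC p p'" using pc by (intro dC_sym) auto
    have s2: "dC p w = dC w p" using pc c by (intro dC_sym) auto
    have s3: "dC z u = dC u z" using c by (intro dC_sym) auto
    have s4: "dC u y = dC y u" using c by (intro dC_sym) auto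
    have s5: "dC z p' = dC p' z" using c pc by (intro dC_sym) auto
    have s6: "dC p' u = dC u p'" using c pc by (intro dC_sym) auto
    have s7: "dC z p = dC p z" using c pc by (intro dC_sym) auto
    have T1: "dC y w \<le> dC y p + dC p w" using c pc by (intro dC_tri) auto
    have T2a: "dC u w \<le> dC u p + dC p w" using c pc by (intro dC_tri) auto
    have T2b: "dC u p \<le> dC u p' + dC p' p" using c pc by (intro dC_tri) auto
    have T3: "dC z w \<le> dC z p + dC p w" using c pc by (intro dC_tri) auto
    have T4: "dC u z \<le> dC u p' + dC p' z" using c pc by (intro dC_tri) auto
    have T5: "dC y u \<le> dC y p' + dC p' u" using c pc by (intro dC_tri) auto
    have iw: "dC w p \<le> gromov_prod dC w y z + K" using i unfolding p_def by simp
    have ju: "dC u p' \<le> gromov_prod dC u y z + K" using j unfolding p'_def by simp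
    show ?thesis
    proof (cases "i \<le> j")
      case True
      then have "dC p p' = real j - real i" using e6 by simp
      then have "gromov_prod dC w y u \<le> gromov_prod dC w y z + 2*K"
        using g1 g2 g4 e1 e3 e4 e5 s1 s2 s3 s4 s5 s6 T1 T2a T2b T4 iw ju by linarith
      then show ?thesis by linarith
    next
      case False
      then have "dC p p' = real i - real j" using e6 by simp
      then have "gromov_prod dC w u z \<le> gromov_prod dC w y z + 2*K"
        using g1 g3 g4 e2 e3 e4 e5 s1 s2 s3 s4 s5 s6 s7 T2a T2b T3 T5 iw ju by linarith
      then show ?thesis by linarith
    qed
  qed
  then show ?thesis unfolding gromov_hyperbolic_on_def by blast
qed

end

theorem mainTheorem17:
  fixes G :: "('g, 'b) monoid_scheme" and S :: "'g set"
    and \<phi> :: "'g \<Rightarrow> 'x::metric_space \<Rightarrow> 'x" and x :: 'x and \<delta> :: real and k :: nat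
  assumes "group G" and "finite S" and "S \<subseteq> carrier G" and "generate G S = carrier G"
    and "isometric_action G \<phi>"
    and "geodesic_space TYPE('x)"
    and "\<delta> \<ge> 0" and "gromov_hyperbolic_on (UNIV::'x set) dist \<delta>"
    and "proper_rel G S \<phi> x"
    and "R2_cond G \<phi> x \<delta> k"
  shows "\<exists>\<delta>'. gromov_hyperbolic_on (carrier G) (cayley_dist G (S \<union> stabilizer_pt G \<phi> x)) \<delta>'"
proof -
  interpret setting G S \<phi> x \<delta> k using assms unfolding setting_def by blast
  show ?thesis by (rule hypC)
qed

end
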